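(* Let $a<b$ be elements of $\mathcal{C}_n$ and let $Id\left(\mathcal{STR}^{(n)}\{a,b\}\right)=\{a_\ell b_{n-\ell}:\ a+1\le\ell\le b\}$. Then $Id\left(\mathcal{STR}^{(n)}\{a,b\}\right)$ is a subsemiring of $\mathcal{STR}^{(n)}\{a,b\}$ which consists exactly of the (multiplicatively) idempotent elements of $\mathcal{STR}^{(n)}\{a,b\}$ different from $\overline{a}$ and $\overline{b}$, and it has $b-a$ elements.
   Context: $\mathcal{C}_n=\{0,1,\dots,n-1\}$ with its usual order; $\widehat{\mathcal{E}}_{\mathcal{C}_n}$ is the set of all order-preserving maps $\mathcal{C}_n\to\mathcal{C}_n$ (not required to fix $0$), a semiring with $(\alpha+\beta)(x)=\max(\alpha(x),\beta(x))$ and $(\alpha\cdot\beta)(x)=\beta(\alpha(x))$. The string $\mathcal{STR}^{(n)}\{a,b\}$ is the set of $\alpha\in\widehat{\mathcal{E}}_{\mathcal{C}_n}$ with image in $\{a,b\}$; its elements are written $a_kb_{n-k}$ ($0\le k\le n$), the map sending $0,\dots,k-1$ to $a$ and $k,\dots,n-1$ to $b$; $\overline{a}$, $\overline{b}$ are the constant maps. *)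

theory Defs
  imports Main
begin

text \<open>Maps C_n -> C_n are modelled as functions nat => nat that are 0 outside {0..<n}
  (extensional representation), so equality of maps is HOL equality.\<close>

definition hatE :: "nat \<Rightarrow> (nat \<Rightarrow> nat) set" where
  "hatE n = {f. (\<forall>x<n. f x < n) \<and> (\<forall>x y. x \<le> y \<longrightarrow> y < n \<longrightarrow> f x \<le> f y)
                \<and> (\<forall>x. n \<le> x \<longrightarrow> f x = 0)}"

definition splus :: "(nat \<Rightarrow> nat) \<Rightarrow> (nat \<Rightarrow> nat) \<Rightarrow> (nat \<Rightarrow> nat)" where
  "splus f g = (\<lambda>x. max (f x) (g x))"

definition stimes :: "nat \<Rightarrow> (nat \<Rightarrow> nat) \<Rightarrow> (nat \<Rightarrow> nat) \<Rightarrow> (nat \<Rightarrow> nat)" where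
  "stimes n f g = (\<lambda>x. if x < n then g (f x) else 0)"

definition STRn :: "nat \<Rightarrow> nat \<Rightarrow> nat \<Rightarrow> (nat \<Rightarrow> nat) set" where
  "STRn n a b = {f \<in> hatE n. \<forall>x<n. f x \<in> {a, b}}"

text \<open>a_k b_{n-k}: sends 0..k-1 to a and k..n-1 to b.\<close>
definition str_elem :: "nat \<Rightarrow> nat \<Rightarrow> nat \<Rightarrow> nat \<Rightarrow> (nat \<Rightarrow> nat)" where
  "str_elem n a b k = (\<lambda>x. if x < k then a else if x < n then b else 0)"

definition const_map :: "nat \<Rightarrow> nat \<Rightarrow> (nat \<Rightarrow> nat)" where
  "const_map n c = (\<lambda>x. if x < n then c else 0)"

definition IdSTR :: "nat \<Rightarrow> nat \<Rightarrow> nat \<Rightarrow> (nat \<Rightarrow> nat) set" where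
  "IdSTR n a b = {str_elem n a b l | l. a + 1 \<le> l \<and> l \<le> b}"

definition is_subsemiring :: "nat \<Rightarrow> (nat \<Rightarrow> nat) set \<Rightarrow> (nat \<Rightarrow> nat) set \<Rightarrow> bool" where
  "is_subsemiring n S T \<longleftrightarrow> S \<subseteq> T \<and> S \<noteq> {} \<and>
     (\<forall>f\<in>S. \<forall>g\<in>S. splus f g \<in> S \<and> stimes n f g \<in> S)"

end

theory Submission
  imports Defs
begin

lemma str_form:
  assumes "a < b" "f \<in> STRn n a b"
  shows "\<exists>k\<le>n. f = str_elem n a b k"
proof -
  have mono: "\<And>x y. x \<le> y \<Longrightarrow> y < n \<Longrightarrow> f x \<le> f y"
    and z: "\<And>x. n \<le> x \<Longrightarrow> f x = 0" and v: "\<And>x. x < n \<Longrightarrow> f x \<in> {a,b}"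
    using assms(2) unfolding STRn_def hatE_def by auto
  show ?thesis
  proof (cases "\<exists>x<n. f x = b")
    case True
    define k where "k = (LEAST x. x < n \<and> f x = b)"
    have k: "k < n" "f k = b" using LeastI_ex[OF True[unfolded Bex_def[symmetric]]] True
      unfolding k_def by (metis (mono_tags, lifting) LeastI_ex)+
    have lt: "\<And>x. x < k \<Longrightarrow> f x = a"
    proof -
      fix x assume "x < k"
      hence "\<not> (x < n \<and> f x = b)" unfolding k_def using not_less_Least by blast
      thus "f x = a" using v[of x] \<open>x<k\<close> k by auto
    qed
    have ge: "\<And>x. k \<le> x \<Longrightarrow> x < n \<Longrightarrow> f x = b"
    proof -
      fix x assume "k \<le> x" "x < n"
      hence "b \<le> f x" using mono k by metis
      thus "f x = b" using v[of x] \<open>x<n\<close> assms(1) by auto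
    qed
    have "f = str_elem n a b k"
      unfolding str_elem_def using lt ge z k by (auto simp: fun_eq_iff)
    thus ?thesis using k(1) by (intro exI[of _ k]) auto
  next
    case False
    have "f = str_elem n a b n"
      unfolding str_elem_def using False v z by (auto simp: fun_eq_iff)
    thus ?thesis by auto
  qed
qed

lemma str_in:
  assumes "a < b" "b < n" "k \<le> n"
  shows "str_elem n a b k \<in> STRn n a b"
  using assms unfolding STRn_def hatE_def str_elem_def by auto

lemma str_inj:
  assumes "a < b" "k \<le> n" "l \<le> n" "str_elem n a b k = str_elem n a b l"
  shows "k = l"
proof (rule ccontr)
  assume "k \<noteq> l"
  then consider "k < l" | "l < k" by linarith
  thus False
  proof cases
    case 1 thus ?thesis using assms fun_cong[OF assms(4), of k] unfolding str_elem_def by auto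
  next
    case 2 thus ?thesis using assms fun_cong[OF assms(4), of l] unfolding str_elem_def by auto
  qed
qed

theorem proposition10:
  fixes n a b :: nat
  assumes "a < b" and "b < n"
  shows "is_subsemiring n (IdSTR n a b) (STRn n a b)
    \<and> IdSTR n a b = {f \<in> STRn n a b. stimes n f f = f \<and> f \<noteq> const_map n a \<and> f \<noteq> const_map n b}
    \<and> card (IdSTR n a b) = b - a"
proof -
  have I: "IdSTR n a b = str_elem n a b ` {a+1..b}"
    unfolding IdSTR_def by auto
  have plus: "splus (str_elem n a b k) (str_elem n a b l) = str_elem n a b (min k l)" if "k \<le> n" "l \<le> n" for k l
    using assms that unfolding splus_def str_elem_def by (auto simp: fun_eq_iff)
  have times: "stimes n (str_elem n a b k) (str_elem n a b l) = str_elem n a b k"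
    if "a+1 \<le> l" "l \<le> b" "k \<le> n" for k l
    using assms that unfolding stimes_def str_elem_def by (auto simp: fun_eq_iff)
  have sub: "is_subsemiring n (IdSTR n a b) (STRn n a b)"
    unfolding is_subsemiring_def I
  proof (intro conjI ballI)
    show "str_elem n a b ` {a + 1..b} \<subseteq> STRn n a b" using str_in assms by auto
    show "str_elem n a b ` {a + 1..b} \<noteq> {}" using assms by auto
  next
    fix f g assume "f \<in> str_elem n a b ` {a + 1..b}" "g \<in> str_elem n a b ` {a + 1..b}"
    then obtain k l where "f = str_elem n a b k" "g = str_elem n a b l" "k \<in> {a+1..b}" "l \<in> {a+1..b}"
      by auto
    thus "splus f g \<in> str_elem n a b ` {a + 1..b}" "stimes n f g \<in> str_elem n a b ` {a + 1..b}"
      using plus times assms by (auto simp: min_def)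
  qed
  have eq: "IdSTR n a b = {f \<in> STRn n a b. stimes n f f = f \<and> f \<noteq> const_map n a \<and> f \<noteq> const_map n b}"
  proof (intro set_eqI iffI)
    fix f assume "f \<in> IdSTR n a b"
    then obtain k where f: "f = str_elem n a b k" "a+1 \<le> k" "k \<le> b" unfolding IdSTR_def by auto
    have "f k \<noteq> const_map n a k" using f assms unfolding str_elem_def const_map_def by auto
    hence "f \<noteq> const_map n a" by metis
    moreover have "f a \<noteq> const_map n b a" using f assms unfolding str_elem_def const_map_def by auto
    hence "f \<noteq> const_map n b" by metis
    ultimately show "f \<in> {f \<in> STRn n a b. stimes n f f = f \<and> f \<noteq> const_map n a \<and> f \<noteq> const_map n b}"
      using f times str_in assms by auto
  next
    fix f assume "f \<in> {f \<in> STRn n a b. stimes n f f = f \<and> f \<noteq> const_map n a \<and> f \<noteq> const_map n b}"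
    hence fs: "f \<in> STRn n a b" "stimes n f f = f" "f \<noteq> const_map n a" "f \<noteq> const_map n b" by auto
    obtain k where k: "k \<le> n" "f = str_elem n a b k" using str_form[OF assms(1) fs(1)] by auto
    have "k \<noteq> 0" using fs(4) k unfolding str_elem_def const_map_def by auto
    have "k \<noteq> n"
    proof
      assume "k = n"
      hence "f = const_map n a" using k(2) unfolding str_elem_def const_map_def by (simp add: fun_eq_iff)
      thus False using fs(3) by simp
    qed
    have st: "\<And>x. x < n \<Longrightarrow> f (f x) = f x"
    proof -
      fix x assume "x < n"
      have "stimes n f f x = f x" using fs(2) by simp
      thus "f (f x) = f x" using \<open>x<n\<close> unfolding stimes_def by simp
    qed
    have f0: "f 0 = a" using k \<open>k\<noteq>0\<close> assms unfolding str_elem_def by simp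
    have fa: "f a = a" using st[of 0] f0 assms by simp
    have fn: "f (n-1) = b" using k \<open>k\<noteq>n\<close> assms unfolding str_elem_def by simp
    have fb: "f b = b" using st[of "n-1"] fn assms by simp
    have "a+1 \<le> k"
    proof (rule ccontr)
      assume "\<not> a+1 \<le> k" hence "f a = b" using k assms unfolding str_elem_def by simp
      thus False using fa assms by simp
    qed
    moreover have "k \<le> b"
    proof (rule ccontr)
      assume "\<not> k \<le> b" hence "f b = a" using k assms unfolding str_elem_def by simp
      thus False using fb assms by simp
    qed
    ultimately show "f \<in> IdSTR n a b" unfolding IdSTR_def using k by auto
  qed
  have "inj_on (str_elem n a b) {a+1..b}"
    using str_inj[OF assms(1)] assms by (intro inj_onI) (meson atLeastAtMost_iff le_trans less_imp_le)
  hence "card (IdSTR n a b) = b - a" unfolding I by (simp add: card_image)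
  thus ?thesis using sub eq by auto
qed

end
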